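(* In the stochastic-context setting, let $\Omega=\{\boldsymbol{\omega}\in\Delta^K: T\cdot\boldsymbol{\omega}[i]\in\mathbb{N}\ \forall i\in[K]\}$ and, for $\boldsymbol{\omega}\in\Omega$, let $\pi^{(\boldsymbol{\omega})}(\mathbf{z})\in\arg\max_{\mathbf{x}\in\mathcal{E}_{\mathbf{z}}}\sum_{i=1}^K u(\mathbf{z},\mathbf{x},b_{\alpha^{(i)}}(\mathbf{z},\mathbf{x}))\,\boldsymbol{\omega}[i]$; let $\Pi=\{\pi^{(\boldsymbol{\omega})}\}_{\boldsymbol{\omega}\in\Omega}$. Consider the algorithm that runs Hedge over $\Pi$: initially $\mathbf{p}_1$ is uniform over $\Pi$; in round $t$ it samples $\pi_t\sim\mathbf{p}_t$ and plays $\mathbf{x}_t=\pi_t(\mathbf{z}_t)$, observes $f_t$, sets $\boldsymbol{\ell}_t[\pi]=-u(\mathbf{z}_t,\pi(\mathbf{z}_t),b_{f_t}(\mathbf{z}_t,\pi(\mathbf{z}_t)))$ for every $\pi\in\Pi$, and sets $\mathbf{p}_{t+1}[\pi]\propto\exp(-\eta\sum_{s=1}^t\boldsymbol{\ell}_s[\pi])$, with $\eta=\sqrt{\log|\Pi|/T}$. Then its expected contextual Stackelberg regret satisfies $\mathbb{E}[R(T)]=O\big(\sqrt{KT\log T}+K\big)$.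
   Context: Game: finite leader actions $\mathcal{A}$, finite follower actions $\mathcal{A}_f$, contexts $\mathcal{Z}\subseteq\mathbb{R}^d$, follower types $\alpha^{(1)},\ldots,\alpha^{(K)}$ ($K\le T$) with known utilities $u_{\alpha^{(i)}}:\mathcal{Z}\times\mathcal{A}\times\mathcal{A}_f\to[0,1]$, known leader utility $u:\mathcal{Z}\times\mathcal{A}\times\mathcal{A}_f\to[0,1]$, $u(\mathbf{z},\mathbf{x},a_f)=\sum_{a_l}\mathbf{x}[a_l]u(\mathbf{z},a_l,a_f)$ for $\mathbf{x}\in\Delta(\mathcal{A})$; best response $b_f(\mathbf{z},\mathbf{x})\in\arg\max_{a_f}\sum_{a_l}\mathbf{x}[a_l]u_f(\mathbf{z},a_l,a_f)$, ties broken by a fixed known ordering. Best-response regions $\mathcal{X}_{\mathbf{z}}(\sigma)=\{\mathbf{x}:b_{\alpha^{(i)}}(\mathbf{z},\mathbf{x})=\sigma(\alpha^{(i)})\ \forall i\}$. $\mathcal{E}_{\mathbf{z}}$ is a set of $\delta$-approximate extreme points with $\delta\le 1/T$: for every $\sigma$ with $\mathcal{X}_{\mathbf{z}}(\sigma)\neq\emptyset$ and every extreme point $\mathbf{x}$ of $\mathrm{cl}(\mathcal{X}_{\mathbf{z}}(\sigma))$, either $\mathbf{x}\in\mathcal{X}_{\mathbf{z}}(\sigma)$ and $\mathbf{x}\in\mathcal{E}_{\mathbf{z}}$, or some $\mathbf{x}'\in\mathcal{E}_{\mathbf{z}}\cap\mathcal{X}_{\mathbf{z}}(\sigma)$ has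 $\|\mathbf{x}'-\mathbf{x}\|_1\le\delta$. Stochastic-context setting: $\mathbf{z}_1,\ldots,\mathbf{z}_T$ i.i.d. from an unknown distribution $\mathcal{P}$; $f_t$ is chosen by a possibly adaptive adversary knowing $\mathcal{P}$, the algorithm and $\mathbf{z}_1,\ldots,\mathbf{z}_{t-1}$ but not $\mathbf{z}_t$; the leader observes $f_t$ after round $t$. Expected regret: $\mathbb{E}[R(T)]=\mathbb{E}_{\mathbf{z}_1,\ldots,\mathbf{z}_T\sim\mathcal{P}}\big[\sum_t u(\mathbf{z}_t,\pi^*(\mathbf{z}_t),b_{f_t}(\mathbf{z}_t,\pi^*(\mathbf{z}_t)))-u(\mathbf{z}_t,\mathbf{x}_t,b_{f_t}(\mathbf{z}_t,\mathbf{x}_t))\big]$ (also over the algorithm's randomness), where $\pi^*$ is the optimal policy given $f_1,\ldots,f_T$ and $\mathcal{P}$. *)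

theory Defs
  imports "HOL-Analysis.Analysis" "HOL-Probability.Probability"
begin

(* Conventions:
   - contexts are points of R^d, embedded as functions nat => real vanishing at indices >= d;
   - leader actions: a finite set A of naturals; mixed strategies x :: nat => real supported on A;
   - follower actions: a finite nonempty set Af of naturals, ties broken by the order of nat;
   - follower types are indexed 0..K-1 (type i has utility uf i);
   - rounds are indexed 0..T-1. *)

definition mixed_strats :: "nat set \<Rightarrow> (nat \<Rightarrow> real) set" where
  "mixed_strats A = {x. (\<forall>a\<in>A. 0 \<le> x a) \<and> (\<forall>a. a \<notin> A \<longrightarrow> x a = 0) \<and> (\<Sum>a\<in>A. x a) = 1}"

definition l1dist :: "nat set \<Rightarrow> (nat \<Rightarrow> real) \<Rightarrow> (nat \<Rightarrow> real) \<Rightarrow> real" where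
  "l1dist A x y = (\<Sum>a\<in>A. \<bar>x a - y a\<bar>)"

definition mixed_util :: "nat set \<Rightarrow> ('z \<Rightarrow> nat \<Rightarrow> nat \<Rightarrow> real) \<Rightarrow> 'z \<Rightarrow> (nat \<Rightarrow> real) \<Rightarrow> nat \<Rightarrow> real" where
  "mixed_util A v z x af = (\<Sum>a\<in>A. x a * v z a af)"

definition best_resp :: "nat set \<Rightarrow> nat set \<Rightarrow> (nat \<Rightarrow> 'z \<Rightarrow> nat \<Rightarrow> nat \<Rightarrow> real)
    \<Rightarrow> nat \<Rightarrow> 'z \<Rightarrow> (nat \<Rightarrow> real) \<Rightarrow> nat" where
  "best_resp A Af uf i z x = (LEAST af. af \<in> Af \<and>
      (\<forall>af'\<in>Af. mixed_util A (uf i) z x af' \<le> mixed_util A (uf i) z x af))"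

definition leader_gain :: "nat set \<Rightarrow> nat set \<Rightarrow> ('z \<Rightarrow> nat \<Rightarrow> nat \<Rightarrow> real)
    \<Rightarrow> (nat \<Rightarrow> 'z \<Rightarrow> nat \<Rightarrow> nat \<Rightarrow> real) \<Rightarrow> nat \<Rightarrow> 'z \<Rightarrow> (nat \<Rightarrow> real) \<Rightarrow> real" where
  "leader_gain A Af u uf i z x = mixed_util A u z x (best_resp A Af uf i z x)"

definition br_region :: "nat set \<Rightarrow> nat set \<Rightarrow> (nat \<Rightarrow> 'z \<Rightarrow> nat \<Rightarrow> nat \<Rightarrow> real) \<Rightarrow> nat
    \<Rightarrow> 'z \<Rightarrow> (nat \<Rightarrow> nat) \<Rightarrow> (nat \<Rightarrow> real) set" where
  "br_region A Af uf K z \<sigma> = {x \<in> mixed_strats A. \<forall>i<K. best_resp A Af uf i z x = \<sigma> i}"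

definition is_extreme_point :: "(nat \<Rightarrow> real) \<Rightarrow> (nat \<Rightarrow> real) set \<Rightarrow> bool" where
  "is_extreme_point x S \<longleftrightarrow> x \<in> S \<and>
     \<not> (\<exists>y\<in>S. \<exists>w\<in>S. y \<noteq> w \<and> (\<exists>\<theta>. 0 < \<theta> \<and> \<theta> < 1 \<and> x = (\<lambda>a. (1 - \<theta>) * y a + \<theta> * w a)))"

text \<open>E_z is a set of delta-approximate extreme points (closure taken in R^A; on vectors
  supported on the finite set A the product topology is the Euclidean one)\<close>
definition approx_extreme_points :: "nat set \<Rightarrow> nat set \<Rightarrow> (nat \<Rightarrow> 'z \<Rightarrow> nat \<Rightarrow> nat \<Rightarrow> real) \<Rightarrow> nat
    \<Rightarrow> real \<Rightarrow> 'z \<Rightarrow> (nat \<Rightarrow> real) set \<Rightarrow> bool" where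
  "approx_extreme_points A Af uf K \<delta> z Ez \<longleftrightarrow>
     (\<forall>\<sigma>. br_region A Af uf K z \<sigma> \<noteq> {} \<longrightarrow>
        (\<forall>x. is_extreme_point x (closure (br_region A Af uf K z \<sigma>)) \<longrightarrow>
           (x \<in> br_region A Af uf K z \<sigma> \<and> x \<in> Ez) \<or>
           (\<exists>x'\<in>Ez \<inter> br_region A Af uf K z \<sigma>. l1dist A x' x \<le> \<delta>)))"

definition weight_grid :: "nat \<Rightarrow> nat \<Rightarrow> (nat \<Rightarrow> real) set" where
  "weight_grid K T = {\<omega>. (\<forall>i<K. 0 \<le> \<omega> i \<and> real T * \<omega> i \<in> \<nat>) \<and> (\<forall>i\<ge>K. \<omega> i = 0)
                          \<and> (\<Sum>i<K. \<omega> i) = 1}"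

definition policy_class :: "'z measure \<Rightarrow> nat \<Rightarrow> nat \<Rightarrow> ((nat \<Rightarrow> real) \<Rightarrow> 'z \<Rightarrow> (nat \<Rightarrow> real))
    \<Rightarrow> ('z \<Rightarrow> (nat \<Rightarrow> real)) set" where
  "policy_class P K T pol = (\<lambda>\<omega>. restrict (pol \<omega>) (space P)) ` weight_grid K T"

definition hedge_prob :: "nat set \<Rightarrow> nat set \<Rightarrow> ('z \<Rightarrow> nat \<Rightarrow> nat \<Rightarrow> real)
    \<Rightarrow> (nat \<Rightarrow> 'z \<Rightarrow> nat \<Rightarrow> nat \<Rightarrow> real) \<Rightarrow> ('z \<Rightarrow> (nat \<Rightarrow> real)) set \<Rightarrow> nat
    \<Rightarrow> (nat \<Rightarrow> 'z) \<Rightarrow> (nat \<Rightarrow> nat) \<Rightarrow> nat \<Rightarrow> ('z \<Rightarrow> (nat \<Rightarrow> real)) \<Rightarrow> real" where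
  "hedge_prob A Af u uf Pol T zs fs t \<pi> =
     (let \<eta> = sqrt (ln (real (card Pol)) / real T);
          w = (\<lambda>\<pi>'. exp (- \<eta> * (\<Sum>s<t. - leader_gain A Af u uf (fs s) (zs s) (\<pi>' (zs s)))))
      in w \<pi> / (\<Sum>\<pi>'\<in>Pol. w \<pi>'))"

definition benchmark :: "'z measure \<Rightarrow> nat set \<Rightarrow> nat set \<Rightarrow> ('z \<Rightarrow> nat \<Rightarrow> nat \<Rightarrow> real)
    \<Rightarrow> (nat \<Rightarrow> 'z \<Rightarrow> nat \<Rightarrow> nat \<Rightarrow> real) \<Rightarrow> nat \<Rightarrow> (nat \<Rightarrow> nat) \<Rightarrow> real" where
  "benchmark P A Af u uf T fs =
     (SUP \<pi> \<in> {\<pi>. (\<forall>z\<in>space P. \<pi> z \<in> mixed_strats A) \<and> (\<forall>a. (\<lambda>z. \<pi> z a) \<in> borel_measurable P)}.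
        (\<Sum>t<T. \<integral>z. leader_gain A Af u uf (fs t) z (\<pi> z) \<partial>P))"

text \<open>expected contextual Stackelberg regret of Hedge over Pol against adversary adv
  (f_t = adv t zs), contexts z_0..z_{T-1} i.i.d. from P; the expectation over the leader's
  draw pi_t ~ p_t is taken inside (the adversary does not see these draws)\<close>
definition hedge_expected_regret :: "'z measure \<Rightarrow> nat set \<Rightarrow> nat set \<Rightarrow> ('z \<Rightarrow> nat \<Rightarrow> nat \<Rightarrow> real)
    \<Rightarrow> (nat \<Rightarrow> 'z \<Rightarrow> nat \<Rightarrow> nat \<Rightarrow> real) \<Rightarrow> nat \<Rightarrow> nat
    \<Rightarrow> ((nat \<Rightarrow> real) \<Rightarrow> 'z \<Rightarrow> (nat \<Rightarrow> real)) \<Rightarrow> (nat \<Rightarrow> (nat \<Rightarrow> 'z) \<Rightarrow> nat) \<Rightarrow> real" where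
  "hedge_expected_regret P A Af u uf K T pol adv =
     (let Pol = policy_class P K T pol in
      \<integral>zs. (let fs = (\<lambda>t. adv t zs) in
              benchmark P A Af u uf T fs
              - (\<Sum>t<T. \<Sum>\<pi>\<in>Pol. hedge_prob A Af u uf Pol T zs fs t \<pi>
                                  * leader_gain A Af u uf (fs t) (zs t) (\<pi> (zs t))))
        \<partial>(PiM {..<T} (\<lambda>_. P)))"

end

theory Submission
  imports Defs
begin

lemma best_resp_props:
  assumes "finite Af" "Af \<noteq> {}"
  shows "best_resp A Af uf i z x \<in> Af \<and>
    (\<forall>af'\<in>Af. mixed_util A (uf i) z x af' \<le> mixed_util A (uf i) z x (best_resp A Af uf i z x))"
proof -
  let ?f = "\<lambda>af. mixed_util A (uf i) z x af"
  have "Max (?f ` Af) \<in> ?f ` Af" using assms by simp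
  then obtain m where m: "m \<in> Af" "?f m = Max (?f ` Af)" by auto
  have "\<forall>af'\<in>Af. ?f af' \<le> ?f m" using m assms by simp
  with m(1) have ex: "\<exists>af. af \<in> Af \<and> (\<forall>af'\<in>Af. ?f af' \<le> ?f af)" by blast
  show ?thesis unfolding best_resp_def by (rule LeastI_ex[OF ex])
qed

lemma mixed_util_bounds:
  assumes "x \<in> mixed_strats A" "finite A" "\<forall>a\<in>A. 0 \<le> v z a af \<and> v z a af \<le> 1"
  shows "0 \<le> mixed_util A v z x af \<and> mixed_util A v z x af \<le> 1"
proof -
  have x: "\<forall>a\<in>A. 0 \<le> x a" "(\<Sum>a\<in>A. x a) = 1" using assms(1) unfolding mixed_strats_def by auto
  have "0 \<le> (\<Sum>a\<in>A. x a * v z a af)" using x assms(3) by (intro sum_nonneg) auto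
  moreover have "(\<Sum>a\<in>A. x a * v z a af) \<le> (\<Sum>a\<in>A. x a)"
    using x assms(3) by (intro sum_mono) (simp add: mult_left_le)
  ultimately show ?thesis using x unfolding mixed_util_def by simp
qed

lemma closed_mixed_strats: "finite A \<Longrightarrow> closed (mixed_strats A)"
proof -
  assume fA: "finite A"
  have eq: "mixed_strats A = {x. \<forall>a. a \<in> A \<longrightarrow> 0 \<le> x a} \<inter> {x. \<forall>a. a \<notin> A \<longrightarrow> x a = 0}
       \<inter> {x. (\<Sum>a\<in>A. x a) = 1}"
    unfolding mixed_strats_def by auto
  have c: "continuous_on UNIV (\<lambda>x::nat\<Rightarrow>real. x a)" for a by simp
  have cs: "continuous_on UNIV (\<lambda>x::nat\<Rightarrow>real. (\<Sum>a\<in>A. x a))"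
    by (intro continuous_on_sum) simp
  have "closed {x::nat\<Rightarrow>real. \<forall>a. a \<in> A \<longrightarrow> 0 \<le> x a}"
    by (intro closed_Collect_all closed_Collect_imp closed_Collect_le) (auto intro: c continuous_on_const)
  moreover have "closed {x::nat\<Rightarrow>real. \<forall>a. a \<notin> A \<longrightarrow> x a = 0}"
    by (intro closed_Collect_all closed_Collect_imp closed_Collect_eq) (auto intro: c continuous_on_const)
  moreover have "closed {x::nat\<Rightarrow>real. (\<Sum>a\<in>A. x a) = 1}"
    by (intro closed_Collect_eq cs continuous_on_const)
  ultimately show ?thesis unfolding eq by (intro closed_Int)
qed

lemma compact_mixed_strats: "finite A \<Longrightarrow> compact (mixed_strats A)"
proof -
  assume fA: "finite A"
  define B where "B = PiE UNIV (\<lambda>a::nat. if a \<in> A then {0..1::real} else {0})"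
  have "compactin (product_topology (\<lambda>_. euclidean) UNIV) B"
    unfolding B_def compactin_PiE by auto
  then have cB: "compact B" by (simp add: euclidean_product_topology)
  have sub: "mixed_strats A \<subseteq> B"
  proof
    fix x assume x: "x \<in> mixed_strats A"
    have "x a \<le> 1" if "a \<in> A" for a
    proof -
      have "x a \<le> (\<Sum>a\<in>A. x a)" using x that fA unfolding mixed_strats_def
        by (intro member_le_sum) auto
      then show ?thesis using x unfolding mixed_strats_def by simp
    qed
    then show "x \<in> B" using x unfolding B_def mixed_strats_def by (auto simp: PiE_def extensional_def)
  qed
  have "compact (B \<inter> mixed_strats A)" using cB closed_mixed_strats[OF fA] by blast
  moreover have "B \<inter> mixed_strats A = mixed_strats A" using sub by blast
  ultimately show ?thesis by simp
qed

lemma mixed_util_comb: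
  "mixed_util A v z (\<lambda>a. (1 - t) * y a + t * w a) af
     = (1 - t) * mixed_util A v z y af + t * mixed_util A v z w af"
  unfolding mixed_util_def sum_distrib_left sum.distrib[symmetric] by (rule sum.cong) (auto simp: algebra_simps)

lemma approx_opt:
  assumes fA: "finite A" and fAf: "finite Af" and nAf: "Af \<noteq> {}"
    and hu: "\<forall>a\<in>A. \<forall>af\<in>Af. \<bar>u z a af\<bar> \<le> 1"
    and happ: "approx_extreme_points A Af uf K \<delta> z Ez"
    and h\<omega>: "\<forall>i<K. 0 \<le> \<omega> i" "(\<Sum>i<K. \<omega> i) = 1"
    and hx: "x \<in> mixed_strats A"
  shows "\<exists>x'\<in>Ez. (\<Sum>i<K. leader_gain A Af u uf i z x * \<omega> i)
                    \<le> (\<Sum>i<K. leader_gain A Af u uf i z x' * \<omega> i) + max 0 \<delta>"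
proof -
  define \<sigma> where "\<sigma> = (\<lambda>i. best_resp A Af uf i z x)"
  define R where "R = br_region A Af uf K z \<sigma>"
  have xR: "x \<in> R" using hx unfolding R_def br_region_def \<sigma>_def by auto
  have Rsub: "R \<subseteq> mixed_strats A" unfolding R_def br_region_def by auto
  have \<sigma>Af: "\<sigma> i \<in> Af" for i unfolding \<sigma>_def using best_resp_props[OF fAf nAf, of A uf i z x] by blast
  define Lf where "Lf = (\<lambda>y. \<Sum>i<K. mixed_util A u z y (\<sigma> i) * \<omega> i)"
  have LfR: "Lf y = (\<Sum>i<K. leader_gain A Af u uf i z y * \<omega> i)" if "y \<in> R" for y
    using that unfolding Lf_def R_def br_region_def leader_gain_def by auto
  define q where "q = (\<lambda>y::nat\<Rightarrow>real. \<Sum>a\<in>A. (y a)^2)"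
  define S where "S = closure R"
  have SM: "S \<subseteq> mixed_strats A" unfolding S_def
    by (rule closure_minimal[OF Rsub closed_mixed_strats[OF fA]])
  have cS: "compact S"
  proof -
    have "compact (mixed_strats A \<inter> S)" using compact_mixed_strats[OF fA] unfolding S_def by blast
    moreover have "mixed_strats A \<inter> S = S" using SM by blast
    ultimately show ?thesis by simp
  qed
  have nS: "S \<noteq> {}" using xR closure_subset unfolding S_def by blast
  have cLf: "continuous_on UNIV Lf" unfolding Lf_def mixed_util_def
    by (intro continuous_intros continuous_on_product_coordinates)
  have cq: "continuous_on UNIV q" unfolding q_def
    by (intro continuous_intros continuous_on_product_coordinates)
  obtain e where e: "e \<in> S" "\<forall>y\<in>S. Lf y \<le> Lf e"
    using continuous_attains_sup[OF cS nS continuous_on_subset[OF cLf]] by auto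
  define Mx where "Mx = S \<inter> {y. Lf y = Lf e}"
  have cM: "compact Mx" unfolding Mx_def
    by (intro compact_Int_closed cS closed_Collect_eq cLf continuous_on_const)
  have nM: "Mx \<noteq> {}" using e unfolding Mx_def by auto
  obtain e2 where e2: "e2 \<in> Mx" "\<forall>y\<in>Mx. q y \<le> q e2"
    using continuous_attains_sup[OF cM nM continuous_on_subset[OF cq]] by auto
  have e2S: "e2 \<in> S" and Le2: "Lf e2 = Lf e" using e2 unfolding Mx_def by auto
  have ext: "is_extreme_point e2 S"
    unfolding is_extreme_point_def
  proof (intro conjI e2S notI)
    assume "\<exists>y\<in>S. \<exists>w\<in>S. y \<noteq> w \<and> (\<exists>\<theta>>0. \<theta> < 1 \<and> e2 = (\<lambda>a. (1 - \<theta>) * y a + \<theta> * w a))"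
    then obtain y w \<theta> where yw: "y \<in> S" "w \<in> S" "y \<noteq> w" "0 < \<theta>" "\<theta> < 1"
      and e2eq: "e2 = (\<lambda>a. (1 - \<theta>) * y a + \<theta> * w a)" by blast
    have Lcomb: "Lf e2 = (1 - \<theta>) * Lf y + \<theta> * Lf w"
      unfolding e2eq Lf_def mixed_util_comb sum_distrib_left sum.distrib[symmetric]
      by (rule sum.cong) (auto simp: algebra_simps)
    have "Lf y \<le> Lf e" "Lf w \<le> Lf e" using e yw by auto
    then have h1: "0 \<le> (1 - \<theta>) * (Lf e - Lf y)" and h2: "0 \<le> \<theta> * (Lf e - Lf w)"
      using yw(4,5) by auto
    have "(1 - \<theta>) * (Lf e - Lf y) + \<theta> * (Lf e - Lf w) = 0" using Lcomb Le2
      by (simp add: algebra_simps)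
    then have "(1 - \<theta>) * (Lf e - Lf y) = 0" "\<theta> * (Lf e - Lf w) = 0" using h1 h2 by linarith+
    then have "Lf y = Lf e" "Lf w = Lf e" using yw(4,5) by auto
    then have "y \<in> Mx" "w \<in> Mx" using yw unfolding Mx_def by auto
    then have qy: "q y \<le> q e2" and qw: "q w \<le> q e2" using e2 by auto
    have ym: "y \<in> mixed_strats A" and wm: "w \<in> mixed_strats A" using yw SM by auto
    obtain a0 where a0: "a0 \<in> A" "y a0 \<noteq> w a0"
    proof -
      obtain a where "y a \<noteq> w a" using yw(3) by auto
      moreover have "a \<in> A" using calculation ym wm unfolding mixed_strats_def by (metis (mono_tags, lifting) mem_Collect_eq)
      ultimately show ?thesis using that by blast
    qed
    have pos: "0 < (\<Sum>a\<in>A. (y a - w a)^2)"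
      using a0 fA by (intro sum_pos2[of A a0]) auto
    have qcomb: "q e2 = (1 - \<theta>) * q y + \<theta> * q w - \<theta> * (1 - \<theta>) * (\<Sum>a\<in>A. (y a - w a)^2)"
    proof -
      have "q e2 = (\<Sum>a\<in>A. (1 - \<theta>) * (y a)^2 + \<theta> * (w a)^2 - \<theta> * (1 - \<theta>) * (y a - w a)^2)"
        unfolding q_def e2eq by (rule sum.cong) (auto simp: power2_eq_square algebra_simps)
      then show ?thesis unfolding q_def by (simp add: sum.distrib sum_subtractf sum_distrib_left)
    qed
    have "\<theta> * (1 - \<theta>) * (\<Sum>a\<in>A. (y a - w a)^2) > 0" using pos yw by simp
    moreover have "(1 - \<theta>) * q y + \<theta> * q w \<le> (1 - \<theta>) * q e2 + \<theta> * q e2"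
      using qy qw yw(4,5) by (intro add_mono mult_left_mono) auto
    ultimately show False using qcomb by (simp add: algebra_simps)
  qed
  have Rne: "R \<noteq> {}" using xR by auto
  have e2opt: "Lf x \<le> Lf e2" using e Le2 xR closure_subset unfolding S_def by auto
  from happ[unfolded approx_extreme_points_def, rule_format, OF Rne[unfolded R_def] ext[unfolded S_def R_def]]
  consider (a) "e2 \<in> R" "e2 \<in> Ez" | (b) x' where "x' \<in> Ez" "x' \<in> R" "l1dist A x' e2 \<le> \<delta>"
    unfolding R_def by blast
  then show ?thesis
  proof cases
    case a
    then show ?thesis using e2opt LfR xR
      by (intro bexI[of _ e2]) (auto simp: max_def)
  next
    case b
    have "Lf e2 - Lf x' = (\<Sum>i<K. (\<Sum>a\<in>A. (e2 a - x' a) * u z a (\<sigma> i)) * \<omega> i)"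
      unfolding Lf_def mixed_util_def
      by (simp add: sum_subtractf[symmetric] left_diff_distrib sum_distrib_right)
    also have "\<dots> \<le> (\<Sum>i<K. l1dist A x' e2 * \<omega> i)"
    proof (intro sum_mono mult_right_mono)
      fix i assume i: "i \<in> {..<K}"
      show "0 \<le> \<omega> i" using h\<omega> i by auto
      have "(\<Sum>a\<in>A. (e2 a - x' a) * u z a (\<sigma> i)) \<le> (\<Sum>a\<in>A. \<bar>x' a - e2 a\<bar>)"
      proof (intro sum_mono)
        fix a assume a: "a \<in> A"
        have "\<bar>u z a (\<sigma> i)\<bar> \<le> 1" using hu a \<sigma>Af by auto
        then have "\<bar>(e2 a - x' a) * u z a (\<sigma> i)\<bar> \<le> \<bar>x' a - e2 a\<bar>"
          by (simp add: abs_mult abs_minus_commute mult_left_le)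
        then show "(e2 a - x' a) * u z a (\<sigma> i) \<le> \<bar>x' a - e2 a\<bar>" by linarith
      qed
      then show "(\<Sum>a\<in>A. (e2 a - x' a) * u z a (\<sigma> i)) \<le> l1dist A x' e2"
        unfolding l1dist_def .
    qed
    also have "\<dots> = l1dist A x' e2" using h\<omega> by (simp add: sum_distrib_left[symmetric])
    finally have "Lf e2 \<le> Lf x' + \<delta>" using b by linarith
    then show ?thesis using e2opt LfR[OF xR] LfR[OF b(2)] b(1) by (intro bexI[of _ x']) (auto simp: max_def)
  qed
qed

lemma meas_gain:
  assumes fAf: "finite Af"
    and um: "\<forall>a af. (\<lambda>z. u z a af) \<in> borel_measurable P"
    and ufm: "\<forall>i a af. (\<lambda>z. uf i z a af) \<in> borel_measurable P"
    and pim: "\<forall>a. (\<lambda>z. \<pi> z a) \<in> borel_measurable P"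
  shows "(\<lambda>z. leader_gain A Af u uf i z (\<pi> z)) \<in> borel_measurable P"
proof -
  have mu: "(\<lambda>z. mixed_util A v z (\<pi> z) af) \<in> borel_measurable P"
    if "\<forall>a af. (\<lambda>z. v z a af) \<in> borel_measurable P" for v af
    unfolding mixed_util_def using that pim by (intro borel_measurable_sum borel_measurable_times) auto
  have mu1: "(\<lambda>z. mixed_util A u z (\<pi> z) af) \<in> borel_measurable P" for af using mu um by blast
  have mu2: "(\<lambda>z. mixed_util A (uf i) z (\<pi> z) af) \<in> borel_measurable P" for af
    using mu[of "uf i"] ufm by blast
  have br: "(\<lambda>z. best_resp A Af uf i z (\<pi> z)) \<in> measurable P (count_space UNIV)"
    unfolding best_resp_def
  proof (rule measurable_Least)
    fix af
    have [measurable]: "(\<lambda>z. mixed_util A (uf i) z (\<pi> z) af') \<in> borel_measurable P" for af'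
      by (rule mu2)
    show "(\<lambda>z. af \<in> Af \<and> (\<forall>af'\<in>Af. mixed_util A (uf i) z (\<pi> z) af' \<le> mixed_util A (uf i) z (\<pi> z) af))
        \<in> measurable P (count_space UNIV)"
      using fAf by measurable
  qed
  show ?thesis unfolding leader_gain_def
    by (rule measurable_compose_countable[OF _ br]) (rule mu1)
qed

lemma grid_finite_card:
  assumes T: "T \<ge> 1"
  shows "finite (weight_grid K T) \<and> card (weight_grid K T) \<le> (T + 1) ^ K"
proof -
  define h where "h \<omega> = (\<lambda>i\<in>{..<K}. nat \<lfloor>real T * \<omega> i\<rfloor>)" for \<omega> :: "nat \<Rightarrow> real"
  have inj: "inj_on h (weight_grid K T)"
  proof (rule inj_onI)
    fix \<omega> \<omega>' assume w: "\<omega> \<in> weight_grid K T" "\<omega>' \<in> weight_grid K T" and e: "h \<omega> = h \<omega>'"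
    show "\<omega> = \<omega>'"
    proof
      fix i show "\<omega> i = \<omega>' i"
      proof (cases "i < K")
        case True
        obtain m where m: "real T * \<omega> i = real m" using w(1) True unfolding weight_grid_def
          by (auto elim!: Nats_cases)
        obtain m' where m': "real T * \<omega>' i = real m'" using w(2) True unfolding weight_grid_def
          by (auto elim!: Nats_cases)
        have "nat \<lfloor>real T * \<omega> i\<rfloor> = nat \<lfloor>real T * \<omega>' i\<rfloor>" using e True unfolding h_def
          by (metis lessThan_iff restrict_apply')
        then have "m = m'" using m m' by simp
        then have "real T * \<omega> i = real T * \<omega>' i" using m m' by simp
        then show ?thesis using T by simp
      next
        case False then show ?thesis using w unfolding weight_grid_def by auto
      qed
    qed
  qed
  have img: "h ` weight_grid K T \<subseteq> PiE {..<K} (\<lambda>_. {0..T})"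
  proof
    fix y assume "y \<in> h ` weight_grid K T"
    then obtain \<omega> where w: "\<omega> \<in> weight_grid K T" and y: "y = h \<omega>" by auto
    have "nat \<lfloor>real T * \<omega> i\<rfloor> \<le> T" if i: "i < K" for i
    proof -
      have nn: "\<forall>j\<in>{..<K}. 0 \<le> \<omega> j" using w unfolding weight_grid_def by auto
      have "\<omega> i \<le> (\<Sum>j<K. \<omega> j)" using i nn by (intro member_le_sum) auto
      then have "\<omega> i \<le> 1" using w unfolding weight_grid_def by auto
      then have "real T * \<omega> i \<le> real T" using T by (simp add: mult_left_le)
      then show ?thesis by (simp add: nat_le_iff floor_le_iff)
    qed
    then show "y \<in> PiE {..<K} (\<lambda>_. {0..T})" unfolding y h_def by auto
  qed
  have fP: "finite (PiE {..<K} (\<lambda>_. {0..T}))" by (simp add: finite_PiE)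
  have fin: "finite (weight_grid K T)"
    using finite_imageD[OF finite_subset[OF img fP] inj] .
  have "card (weight_grid K T) = card (h ` weight_grid K T)" using card_image[OF inj] by simp
  also have "\<dots> \<le> card (PiE {..<K} (\<lambda>_. {0..T}))" by (rule card_mono[OF fP img])
  also have "\<dots> = (T + 1) ^ K" by (simp add: card_PiE)
  finally show ?thesis using fin by simp
qed

lemma count_sum:
  fixes fs :: "nat \<Rightarrow> nat" and h :: "nat \<Rightarrow> real"
  assumes "\<forall>t<T. fs t < K"
  shows "(\<Sum>t<T. h (fs t)) = (\<Sum>i<K. real (card {t\<in>{..<T}. fs t = i}) * h i)"
proof -
  have "(\<Sum>t<T. h (fs t)) = (\<Sum>t<T. \<Sum>i<K. if i = fs t then h i else 0)"
  proof (intro sum.cong refl)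
    fix t assume "t \<in> {..<T}"
    then have "fs t \<in> {..<K}" using assms by auto
    then show "h (fs t) = (\<Sum>i<K. if i = fs t then h i else 0)" by (subst sum.delta) auto
  qed
  also have "\<dots> = (\<Sum>i<K. \<Sum>t<T. if i = fs t then h i else 0)" by (rule sum.swap)
  also have "\<dots> = (\<Sum>i<K. real (card {t\<in>{..<T}. fs t = i}) * h i)"
  proof (intro sum.cong refl)
    fix i
    have "(\<Sum>t<T. if i = fs t then h i else 0) = (\<Sum>t\<in>{t\<in>{..<T}. fs t = i}. h i)"
      by (simp add: sum.inter_filter[symmetric] eq_commute)
    then show "(\<Sum>t<T. if i = fs t then h i else 0) = real (card {t\<in>{..<T}. fs t = i}) * h i"
      by simp
  qed
  finally show ?thesis .
qed

lemma hedge_bound: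
  fixes Pol :: "'p set" and g :: "nat \<Rightarrow> 'p \<Rightarrow> real" and \<eta> :: real
  assumes fin: "finite Pol" and \<pi>0: "\<pi>0 \<in> Pol"
    and g01: "\<And>t \<pi>. t < T \<Longrightarrow> \<pi> \<in> Pol \<Longrightarrow> 0 \<le> g t \<pi> \<and> g t \<pi> \<le> 1"
    and \<eta>: "0 \<le> \<eta>" "\<eta> \<le> 1"
  shows "\<eta> * (\<Sum>t<T. g t \<pi>0) \<le> ln (real (card Pol))
     + \<eta> * (\<Sum>t<T. \<Sum>\<pi>\<in>Pol. exp (- \<eta> * (\<Sum>s<t. - g s \<pi>)) / (\<Sum>\<pi>'\<in>Pol. exp (- \<eta> * (\<Sum>s<t. - g s \<pi>'))) * g t \<pi>)
     + \<eta>^2 * real T"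
proof -
  define w where "w t \<pi> = exp (- \<eta> * (\<Sum>s<t. - g s \<pi>))" for t \<pi>
  define W where "W t = (\<Sum>\<pi>\<in>Pol. w t \<pi>)" for t
  define H where "H t = (\<Sum>\<pi>\<in>Pol. w t \<pi> / W t * g t \<pi>)" for t
  have wpos: "0 < w t \<pi>" for t \<pi> unfolding w_def by simp
  have Wpos: "0 < W t" for t unfolding W_def using fin \<pi>0 wpos
    by (intro sum_pos2[of Pol \<pi>0]) (auto intro: less_imp_le)
  have wsuc: "w (Suc t) \<pi> = w t \<pi> * exp (\<eta> * g t \<pi>)" for t \<pi>
    unfolding w_def by (simp add: exp_add[symmetric] algebra_simps)
  have step: "W (Suc t) \<le> W t * exp (\<eta> * H t + \<eta>^2)" if tT: "t < T" for t
  proof -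
    have "W (Suc t) = (\<Sum>\<pi>\<in>Pol. w t \<pi> * exp (\<eta> * g t \<pi>))" unfolding W_def wsuc ..
    also have "\<dots> \<le> (\<Sum>\<pi>\<in>Pol. w t \<pi> * (1 + \<eta> * g t \<pi> + \<eta>^2))"
    proof (intro sum_mono mult_left_mono)
      fix \<pi> assume p: "\<pi> \<in> Pol"
      have ge: "0 \<le> \<eta> * g t \<pi>" "\<eta> * g t \<pi> \<le> 1" using g01[OF tT p] \<eta>
        by (auto simp: mult_le_one)
      have "(\<eta> * g t \<pi>)^2 \<le> \<eta>^2" using g01[OF tT p] \<eta>
        by (simp add: power_mult_distrib mult_left_le power_le_one)
      then show "exp (\<eta> * g t \<pi>) \<le> 1 + \<eta> * g t \<pi> + \<eta>^2"
        using exp_bound[OF ge] by linarith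
      show "0 \<le> w t \<pi>" using wpos[of t \<pi>] by simp
    qed
    also have "\<dots> = W t * (1 + \<eta> * H t + \<eta>^2)"
    proof -
      have "W t * H t = (\<Sum>\<pi>\<in>Pol. w t \<pi> * g t \<pi>)"
        unfolding H_def sum_distrib_left using Wpos[of t] by (intro sum.cong) auto
      moreover have "(\<Sum>\<pi>\<in>Pol. w t \<pi> * (1 + \<eta> * g t \<pi> + \<eta>^2))
          = W t + \<eta> * (\<Sum>\<pi>\<in>Pol. w t \<pi> * g t \<pi>) + \<eta>^2 * W t"
        unfolding W_def sum_distrib_left sum.distrib[symmetric]
        by (rule sum.cong) (auto simp: algebra_simps)
      ultimately show ?thesis by (simp add: algebra_simps)
    qed
    also have "\<dots> \<le> W t * exp (\<eta> * H t + \<eta>^2)"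
      using Wpos[of t] exp_ge_add_one_self[of "\<eta> * H t + \<eta>^2"]
      by (intro mult_left_mono) (auto simp: add.assoc)
    finally show ?thesis .
  qed
  have ind: "t \<le> T \<Longrightarrow> W t \<le> W 0 * exp (\<eta> * (\<Sum>s<t. H s) + \<eta>^2 * real t)" for t
  proof (induction t)
    case 0 then show ?case by simp
  next
    case (Suc t)
    have "W (Suc t) \<le> W t * exp (\<eta> * H t + \<eta>^2)" using Suc.prems by (intro step) simp
    also have "\<dots> \<le> W 0 * exp (\<eta> * (\<Sum>s<t. H s) + \<eta>^2 * real t) * exp (\<eta> * H t + \<eta>^2)"
      using Suc by (intro mult_right_mono) (auto simp del: exp_add)
    also have "\<dots> = W 0 * exp (\<eta> * (\<Sum>s<Suc t. H s) + \<eta>^2 * real (Suc t))"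
      by (simp add: exp_add[symmetric] algebra_simps)
    finally show ?case .
  qed
  have W0: "W 0 = real (card Pol)" unfolding W_def w_def by simp
  have "w T \<pi>0 \<le> W T" unfolding W_def using fin \<pi>0 wpos
    by (intro member_le_sum) (auto intro: less_imp_le)
  also have "\<dots> \<le> real (card Pol) * exp (\<eta> * (\<Sum>s<T. H s) + \<eta>^2 * real T)"
    using ind[of T] W0 by simp
  finally have "w T \<pi>0 \<le> real (card Pol) * exp (\<eta> * (\<Sum>s<T. H s) + \<eta>^2 * real T)" .
  moreover have cpos: "0 < real (card Pol)" using fin \<pi>0 card_gt_0_iff by auto
  ultimately have "ln (w T \<pi>0) \<le> ln (real (card Pol) * exp (\<eta> * (\<Sum>s<T. H s) + \<eta>^2 * real T))"
    using wpos by (subst ln_le_cancel_iff) auto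
  also have "\<dots> = ln (real (card Pol)) + (\<eta> * (\<Sum>s<T. H s) + \<eta>^2 * real T)"
    using cpos by (simp add: ln_mult)
  finally have "ln (w T \<pi>0) \<le> ln (real (card Pol)) + (\<eta> * (\<Sum>s<T. H s) + \<eta>^2 * real T)" .
  moreover have "ln (w T \<pi>0) = \<eta> * (\<Sum>t<T. g t \<pi>0)" unfolding w_def by (simp add: sum_negf)
  ultimately show ?thesis unfolding H_def w_def W_def by simp
qed

lemma hoeff_step:
  assumes P: "prob_space P" and l: "l > 0"
    and Ym: "Y \<in> borel_measurable P" and Y01: "\<forall>z\<in>space P. 0 \<le> Y z \<and> Y z \<le> 1"
  shows "(\<integral>\<^sup>+ y. ennreal (exp (l * ((\<integral>z. Y z \<partial>P) - Y y))) \<partial>P) \<le> ennreal (exp (l^2 / 8))"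
proof -
  interpret prob_space P by (rule P)
  interpret interval_bounded_random_variable P "\<lambda>z. - Y z" "-1" "0"
  proof unfold_locales
    show "(\<lambda>z. - Y z) \<in> borel_measurable P" using Ym by measurable
    show "AE x in P. - Y x \<in> {- 1..0}" using Y01 by (intro AE_I2) auto
  qed
  have "(\<integral>\<^sup>+ x. ennreal (exp (l * (- Y x - expectation (\<lambda>z. - Y z)))) \<partial>P) \<le> ennreal (exp (l\<^sup>2 * (0 - - 1)\<^sup>2 / 8))"
    by (rule Hoeffdings_lemma_nn_integral[OF l])
  moreover have "expectation (\<lambda>z. - Y z) = - (\<integral>z. Y z \<partial>P)" by simp
  ultimately show ?thesis by (simp add: algebra_simps)
qed

lemma mart_bound:
  fixes P :: "'z measure" and a :: "nat \<Rightarrow> (nat \<Rightarrow> 'z) \<Rightarrow> nat" and Y :: "nat \<Rightarrow> 'z \<Rightarrow> real"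
  assumes P: "prob_space P" and l: "l > 0"
    and am: "\<forall>t<T. a t \<in> measurable (PiM {..<T} (\<lambda>_. P)) (count_space UNIV)"
    and adep: "\<forall>t<T. \<forall>zs\<in>space (PiM {..<T} (\<lambda>_. P)). \<forall>zs'\<in>space (PiM {..<T} (\<lambda>_. P)).
          (\<forall>s<t. zs s = zs' s) \<longrightarrow> a t zs = a t zs'"
    and Ym: "\<And>i. Y i \<in> borel_measurable P" and Y01: "\<And>i. \<forall>z\<in>space P. 0 \<le> Y i z \<and> Y i z \<le> 1"
  shows "n \<le> T \<Longrightarrow> (\<integral>\<^sup>+ zs. ennreal (exp (l * (\<Sum>t<n. (\<integral>z. Y (a t zs) z \<partial>P) - Y (a t zs) (zs t))))
            \<partial>(PiM {..<T} (\<lambda>_. P))) \<le> ennreal (exp (l^2 * real n / 8))"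
proof (induction n)
  interpret PP: prob_space "PiM {..<T} (\<lambda>_. P)" by (intro prob_space_PiM P)
  case 0
  then show ?case by (simp add: PP.emeasure_space_1)
next
  case (Suc n)
  define PI where "PI = PiM {..<T} (\<lambda>_. P)"
  interpret PP: prob_space PI unfolding PI_def by (intro prob_space_PiM P)
  interpret P: prob_space P by (rule P)
  interpret PS: product_sigma_finite "\<lambda>_. P"
    by unfold_locales
  define S where "S k zs = (\<Sum>t<k. (\<integral>z. Y (a t zs) z \<partial>P) - Y (a t zs) (zs t))" for k zs
  have n: "n < T" using Suc by simp
  have Smeas: "(\<lambda>zs. S k zs) \<in> borel_measurable PI" if "k \<le> T" for k
    unfolding S_def
  proof (intro borel_measurable_sum borel_measurable_diff)
    fix t assume "t \<in> {..<k}"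
    then have t: "t < T" using that by simp
    have amt: "a t \<in> measurable PI (count_space UNIV)" using am t unfolding PI_def by auto
    show "(\<lambda>zs. \<integral>z. Y (a t zs) z \<partial>P) \<in> borel_measurable PI"
      by (rule measurable_compose_countable[OF _ amt]) simp
    have "(\<lambda>zs. Y i (zs t)) \<in> borel_measurable PI" for i
      unfolding PI_def using t
      by (intro measurable_compose[OF measurable_component_singleton[of t "{..<T}" "\<lambda>_. P"] Ym]) auto
    then show "(\<lambda>zs. Y (a t zs) (zs t)) \<in> borel_measurable PI"
      by (rule measurable_compose_countable[OF _ amt])
  qed
  define I where "I = {..<T} - {n}"
  have insI: "insert n I = {..<T}" and nI: "n \<notin> I" and fI: "finite I" using n unfolding I_def by auto
  have PIeq: "PI = PiM (insert n I) (\<lambda>_. P)" unfolding PI_def insI ..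
  obtain y0 where y0: "y0 \<in> space P" using P.not_empty by auto
  have upd_space: "x(n := y) \<in> space PI" if "x \<in> space (PiM I (\<lambda>_. P))" "y \<in> space P" for x y
    using that unfolding PI_def space_PiM insI[symmetric] by (auto simp: PiE_def extensional_def Pi_def)
  have Sconst: "S n (x(n := y)) = S n (x(n := y0))"
    if x: "x \<in> space (PiM I (\<lambda>_. P))" and y: "y \<in> space P" for x y
    unfolding S_def
  proof (intro sum.cong refl)
    fix t assume "t \<in> {..<n}"
    then have t: "t < n" by simp
    have "a t (x(n := y)) = a t (x(n := y0))"
      using adep[rule_format, of t "x(n := y)" "x(n := y0)"] t n upd_space[OF x y] upd_space[OF x y0]
      unfolding PI_def by auto
    then show "(\<integral>z. Y (a t (x(n := y))) z \<partial>P) - Y (a t (x(n := y))) ((x(n := y)) t)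
       = (\<integral>z. Y (a t (x(n := y0))) z \<partial>P) - Y (a t (x(n := y0))) ((x(n := y0)) t)"
      using t by simp
  qed
  have aconst: "a n (x(n := y)) = a n (x(n := y0))"
    if x: "x \<in> space (PiM I (\<lambda>_. P))" and y: "y \<in> space P" for x y
    using adep[rule_format, of n "x(n := y)" "x(n := y0)"] n upd_space[OF x y] upd_space[OF x y0]
    unfolding PI_def by auto
  have upd_meas: "(\<lambda>x. x(n := y0)) \<in> measurable (PiM I (\<lambda>_. P)) PI"
  proof -
    have cm: "(\<lambda>x. (x(n := y0)) j) \<in> measurable (PiM I (\<lambda>_. P)) P" if j: "j \<in> insert n I" for j
    proof (cases "j = n")
      case True then show ?thesis using y0 by simp
    next
      case False then have "j \<in> I" using j by simp
      then show ?thesis using False by simp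
    qed
    have "(\<lambda>x. \<lambda>j\<in>insert n I. (x(n := y0)) j) \<in> measurable (PiM I (\<lambda>_. P)) (PiM (insert n I) (\<lambda>_. P))"
      by (rule measurable_restrict) (rule cm)
    moreover have "(\<lambda>j\<in>insert n I. (x(n := y0)) j) = x(n := y0)" if "x \<in> space (PiM I (\<lambda>_. P))" for x
      using that by (auto simp: space_PiM PiE_def extensional_def restrict_def fun_eq_iff)
    ultimately show ?thesis unfolding PIeq by (subst measurable_cong[symmetric]) auto
  qed
  have innerc: "(\<integral>\<^sup>+ y. ennreal (exp (l * S n (x(n := y)))) \<partial>P) = ennreal (exp (l * S n (x(n := y0))))"
    if x: "x \<in> space (PiM I (\<lambda>_. P))" for x
  proof -
    have "(\<integral>\<^sup>+ y. ennreal (exp (l * S n (x(n := y)))) \<partial>P) = (\<integral>\<^sup>+ y. ennreal (exp (l * S n (x(n := y0)))) \<partial>P)"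
      using Sconst[OF x] by (intro nn_integral_cong) auto
    then show ?thesis by (simp add: P.emeasure_space_1)
  qed
  have inner: "(\<integral>\<^sup>+ y. ennreal (exp (l * S (Suc n) (x(n := y)))) \<partial>P)
      \<le> ennreal (exp (l^2 / 8)) * (\<integral>\<^sup>+ y. ennreal (exp (l * S n (x(n := y)))) \<partial>P)"
    if x: "x \<in> space (PiM I (\<lambda>_. P))" for x
  proof -
    define i where "i = a n (x(n := y0))"
    define c where "c = exp (l * S n (x(n := y0)))"
    have "(\<integral>\<^sup>+ y. ennreal (exp (l * S (Suc n) (x(n := y)))) \<partial>P)
        = (\<integral>\<^sup>+ y. ennreal c * ennreal (exp (l * ((\<integral>z. Y i z \<partial>P) - Y i y))) \<partial>P)"
    proof (rule nn_integral_cong)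
      fix y assume y: "y \<in> space P"
      have "S (Suc n) (x(n := y)) = S n (x(n := y0)) + ((\<integral>z. Y i z \<partial>P) - Y i y)"
        using Sconst[OF x y] aconst[OF x y] unfolding i_def by (simp add: S_def)
      then show "ennreal (exp (l * S (Suc n) (x(n := y))))
          = ennreal c * ennreal (exp (l * ((\<integral>z. Y i z \<partial>P) - Y i y)))"
        unfolding c_def by (simp add: distrib_left exp_add ennreal_mult)
    qed
    also have "\<dots> = ennreal c * (\<integral>\<^sup>+ y. ennreal (exp (l * ((\<integral>z. Y i z \<partial>P) - Y i y))) \<partial>P)"
      by (rule nn_integral_cmult) (use Ym in measurable)
    also have "\<dots> \<le> ennreal c * ennreal (exp (l^2 / 8))"
      by (intro mult_left_mono hoeff_step[OF P l Ym Y01]) auto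
    also have "(\<integral>\<^sup>+ y. ennreal (exp (l * S n (x(n := y)))) \<partial>P) = ennreal c"
    proof -
      have "(\<integral>\<^sup>+ y. ennreal (exp (l * S n (x(n := y)))) \<partial>P) = (\<integral>\<^sup>+ y. ennreal c \<partial>P)"
        unfolding c_def using Sconst[OF x] by (intro nn_integral_cong) auto
      then show ?thesis by (simp add: P.emeasure_space_1)
    qed
    ultimately show ?thesis by (simp add: mult.commute)
  qed
  have "(\<integral>\<^sup>+ zs. ennreal (exp (l * S (Suc n) zs)) \<partial>PI)
      = (\<integral>\<^sup>+ x. (\<integral>\<^sup>+ y. ennreal (exp (l * S (Suc n) (x(n := y)))) \<partial>P) \<partial>PiM I (\<lambda>_. P))"
    unfolding PIeq
    by (rule PS.product_nn_integral_insert[OF fI nI]) (use Smeas[of "Suc n"] Suc.prems in \<open>simp add: PIeq\<close>)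
  also have "\<dots> \<le> (\<integral>\<^sup>+ x. ennreal (exp (l^2 / 8)) * (\<integral>\<^sup>+ y. ennreal (exp (l * S n (x(n := y)))) \<partial>P) \<partial>PiM I (\<lambda>_. P))"
    by (intro nn_integral_mono inner)
  also have "\<dots> = ennreal (exp (l^2 / 8)) * (\<integral>\<^sup>+ x. (\<integral>\<^sup>+ y. ennreal (exp (l * S n (x(n := y)))) \<partial>P) \<partial>PiM I (\<lambda>_. P))"
  proof -
    have "(\<integral>\<^sup>+ x. ennreal (exp (l^2 / 8)) * (\<integral>\<^sup>+ y. ennreal (exp (l * S n (x(n := y)))) \<partial>P) \<partial>PiM I (\<lambda>_. P))
       = (\<integral>\<^sup>+ x. ennreal (exp (l^2 / 8)) * ennreal (exp (l * S n (x(n := y0)))) \<partial>PiM I (\<lambda>_. P))"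
      by (intro nn_integral_cong) (simp add: innerc)
    also have "\<dots> = ennreal (exp (l^2 / 8)) * (\<integral>\<^sup>+ x. ennreal (exp (l * S n (x(n := y0)))) \<partial>PiM I (\<lambda>_. P))"
      by (rule nn_integral_cmult)
        (intro measurable_compose[OF measurable_compose[OF upd_meas Smeas[of n]]], use n in auto)
    also have "(\<integral>\<^sup>+ x. ennreal (exp (l * S n (x(n := y0)))) \<partial>PiM I (\<lambda>_. P))
       = (\<integral>\<^sup>+ x. (\<integral>\<^sup>+ y. ennreal (exp (l * S n (x(n := y)))) \<partial>P) \<partial>PiM I (\<lambda>_. P))"
      by (intro nn_integral_cong) (simp add: innerc)
    finally show ?thesis .
  qed
  also have "(\<integral>\<^sup>+ x. (\<integral>\<^sup>+ y. ennreal (exp (l * S n (x(n := y)))) \<partial>P) \<partial>PiM I (\<lambda>_. P))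
      = (\<integral>\<^sup>+ zs. ennreal (exp (l * S n zs)) \<partial>PI)"
    unfolding PIeq
    by (rule PS.product_nn_integral_insert[OF fI nI, symmetric]) (use Smeas[of n] n in \<open>simp add: PIeq\<close>)
  also have "\<dots> \<le> ennreal (exp (l^2 * real n / 8))"
    using Suc by (simp add: S_def PI_def)
  finally have "(\<integral>\<^sup>+ zs. ennreal (exp (l * S (Suc n) zs)) \<partial>PI)
      \<le> ennreal (exp (l^2 / 8)) * ennreal (exp (l^2 * real n / 8))"
    by (simp add: mult_left_mono)
  also have "\<dots> = ennreal (exp (l^2 * real (Suc n) / 8))"
    by (simp add: ennreal_mult[symmetric] exp_add[symmetric] add_divide_distrib algebra_simps)
  finally show ?case unfolding S_def PI_def .
qed

lemma D_meas:
  fixes P :: "'z measure" and a :: "nat \<Rightarrow> (nat \<Rightarrow> 'z) \<Rightarrow> nat" and Y :: "nat \<Rightarrow> 'z \<Rightarrow> real"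
  assumes am: "\<forall>t<T. a t \<in> measurable (PiM {..<T} (\<lambda>_. P)) (count_space UNIV)"
    and Ym: "\<And>i. Y i \<in> borel_measurable P" and k: "k \<le> T"
  shows "(\<lambda>zs. (\<Sum>t<k. (\<integral>z. Y (a t zs) z \<partial>P) - Y (a t zs) (zs t))) \<in> borel_measurable (PiM {..<T} (\<lambda>_. P))"
proof (intro borel_measurable_sum borel_measurable_diff)
  fix t assume "t \<in> {..<k}"
  then have t: "t < T" using k by simp
  have amt: "a t \<in> measurable (PiM {..<T} (\<lambda>_. P)) (count_space UNIV)" using am t by auto
  show "(\<lambda>zs. \<integral>z. Y (a t zs) z \<partial>P) \<in> borel_measurable (PiM {..<T} (\<lambda>_. P))"
    by (rule measurable_compose_countable[OF _ amt]) simp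
  have "(\<lambda>zs. Y i (zs t)) \<in> borel_measurable (PiM {..<T} (\<lambda>_. P))" for i
    using t by (intro measurable_compose[OF measurable_component_singleton[of t "{..<T}" "\<lambda>_. P"] Ym]) auto
  then show "(\<lambda>zs. Y (a t zs) (zs t)) \<in> borel_measurable (PiM {..<T} (\<lambda>_. P))"
    by (rule measurable_compose_countable[OF _ amt])
qed

lemma mart_integral:
  fixes P :: "'z measure" and a :: "nat \<Rightarrow> (nat \<Rightarrow> 'z) \<Rightarrow> nat" and Y :: "nat \<Rightarrow> 'z \<Rightarrow> real"
  assumes P: "prob_space P" and l: "l > 0"
    and am: "\<forall>t<T. a t \<in> measurable (PiM {..<T} (\<lambda>_. P)) (count_space UNIV)"
    and adep: "\<forall>t<T. \<forall>zs\<in>space (PiM {..<T} (\<lambda>_. P)). \<forall>zs'\<in>space (PiM {..<T} (\<lambda>_. P)).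
          (\<forall>s<t. zs s = zs' s) \<longrightarrow> a t zs = a t zs'"
    and Ym: "\<And>i. Y i \<in> borel_measurable P" and Y01: "\<And>i. \<forall>z\<in>space P. 0 \<le> Y i z \<and> Y i z \<le> 1"
  shows "integrable (PiM {..<T} (\<lambda>_. P)) (\<lambda>zs. exp (l * (\<Sum>t<T. (\<integral>z. Y (a t zs) z \<partial>P) - Y (a t zs) (zs t))))
    \<and> (\<integral>zs. exp (l * (\<Sum>t<T. (\<integral>z. Y (a t zs) z \<partial>P) - Y (a t zs) (zs t))) \<partial>(PiM {..<T} (\<lambda>_. P)))
        \<le> exp (l^2 * real T / 8)"
proof -
  let ?f = "\<lambda>zs. exp (l * (\<Sum>t<T. (\<integral>z. Y (a t zs) z \<partial>P) - Y (a t zs) (zs t)))"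
  have m: "?f \<in> borel_measurable (PiM {..<T} (\<lambda>_. P))"
    using D_meas[OF am Ym order_refl] by measurable
  have b: "(\<integral>\<^sup>+ zs. ennreal (?f zs) \<partial>(PiM {..<T} (\<lambda>_. P))) \<le> ennreal (exp (l^2 * real T / 8))"
    by (rule mart_bound[OF P l am adep Ym Y01 order_refl])
  have int: "integrable (PiM {..<T} (\<lambda>_. P)) ?f"
  proof (rule integrableI_bounded[OF m])
    have "(\<integral>\<^sup>+ zs. ennreal (norm (?f zs)) \<partial>(PiM {..<T} (\<lambda>_. P))) = (\<integral>\<^sup>+ zs. ennreal (?f zs) \<partial>(PiM {..<T} (\<lambda>_. P)))"
      by simp
    also have "\<dots> < \<infinity>" using b by (simp add: le_less_trans)
    finally show "(\<integral>\<^sup>+ zs. ennreal (norm (?f zs)) \<partial>(PiM {..<T} (\<lambda>_. P))) < \<infinity>" .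
  qed
  have "ennreal (\<integral>zs. ?f zs \<partial>(PiM {..<T} (\<lambda>_. P))) = (\<integral>\<^sup>+ zs. ennreal (?f zs) \<partial>(PiM {..<T} (\<lambda>_. P)))"
    by (rule nn_integral_eq_integral[OF int, symmetric]) simp
  with b have "ennreal (\<integral>zs. ?f zs \<partial>(PiM {..<T} (\<lambda>_. P))) \<le> ennreal (exp (l^2 * real T / 8))" by simp
  then have "(\<integral>zs. ?f zs \<partial>(PiM {..<T} (\<lambda>_. P))) \<le> exp (l^2 * real T / 8)"
    by (simp add: ennreal_le_iff)
  with int show ?thesis by simp
qed

lemma sqrt_div_mul: "0 < (T::real) \<Longrightarrow> 0 \<le> x \<Longrightarrow> sqrt (x / T) * T = sqrt (x * T)"
proof -
  assume T: "0 < T" and x: "0 \<le> x"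
  have "sqrt (x / T) * T = sqrt (x / T) * sqrt (T^2)" using T by simp
  also have "\<dots> = sqrt (x / T * T^2)" by (rule real_sqrt_mult[symmetric])
  also have "x / T * T^2 = x * T" using T by (simp add: power2_eq_square)
  finally show ?thesis .
qed

lemma ln2_ge_half: "1 / 2 \<le> ln (2::real)"
proof -
  have "exp (1/2::real) \<le> 1 + 1/2 + (1/2)^2" by (rule exp_bound) auto
  also have "\<dots> \<le> 2" by (simp add: power2_eq_square)
  finally have "exp (1/2::real) \<le> 2" .
  then show ?thesis by (subst ln_ge_iff) auto
qed

lemma lnM_bound:
  assumes T: "2 \<le> T" and K: "1 \<le> K" and M: "1 \<le> M" "M \<le> (T + 1) ^ K"
  shows "ln (real M) \<le> 2 * real K * ln (real T) \<and> 1 \<le> 2 * real K * ln (real T)"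
proof -
  have "real M \<le> real ((T + 1) ^ K)" using M(2) by (simp only: of_nat_le_iff)
  then have "ln (real M) \<le> ln (real ((T + 1) ^ K))" using M(1) by (subst ln_le_cancel_iff) auto
  also have "\<dots> = real K * ln (real T + 1)" by (simp add: ln_realpow)
  also have "ln (real T + 1) \<le> ln ((real T)^2)"
  proof -
    have T2: "2 \<le> real T" using T by simp
    have "2 * real T \<le> real T * real T" using T2 by (intro mult_right_mono) auto
    then have "real T + 1 \<le> (real T)^2" using T2 unfolding power2_eq_square by linarith
    then show ?thesis using T2 by (subst ln_le_cancel_iff) auto
  qed
  also have "ln ((real T)^2) = 2 * ln (real T)" using T by (simp add: ln_realpow)
  finally have a: "ln (real M) \<le> 2 * real K * ln (real T)" using K by (simp add: mult_left_mono)
  have "ln 2 \<le> ln (real T)" using T by (subst ln_le_cancel_iff) auto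
  then have "1 / 2 \<le> ln (real T)" using ln2_ge_half by linarith
  then have "1 \<le> 2 * ln (real T)" by simp
  also have "\<dots> \<le> 2 * real K * ln (real T)" using K \<open>1/2 \<le> ln (real T)\<close> by simp
  finally show ?thesis using a by simp
qed

lemma numeric_final:
  assumes T: "2 \<le> T" and K: "1 \<le> K" and x: "0 \<le> x" "x \<le> 2 * real K * ln (real T)"
    and y: "0 \<le> y" "y \<le> 2 * real K * ln (real T)"
  shows "1 + 2 * sqrt (real T * x) + 2 * sqrt (real T * y) \<le> 8 * (sqrt (real K * real T * ln (real T)) + real K)"
proof -
  let ?s = "sqrt (real K * real T * ln (real T))"
  have lnT: "0 \<le> ln (real T)" using T by simp
  have "sqrt (real T * x) \<le> sqrt (real T * (2 * real K * ln (real T)))"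
    using x by (intro real_sqrt_le_mono mult_left_mono) auto
  also have "\<dots> = sqrt 2 * ?s" by (simp add: real_sqrt_mult[symmetric] algebra_simps)
  also have "\<dots> \<le> 2 * ?s" using sqrt2_less_2 lnT by (intro mult_right_mono) auto
  finally have a: "sqrt (real T * x) \<le> 2 * ?s" .
  have "sqrt (real T * y) \<le> sqrt (real T * (2 * real K * ln (real T)))"
    using y by (intro real_sqrt_le_mono mult_left_mono) auto
  also have "\<dots> = sqrt 2 * ?s" by (simp add: real_sqrt_mult[symmetric] algebra_simps)
  also have "\<dots> \<le> 2 * ?s" using sqrt2_less_2 lnT by (intro mult_right_mono) auto
  finally have b: "sqrt (real T * y) \<le> 2 * ?s" .
  show ?thesis using a b K by simp
qed

lemma numeric_triv:
  assumes T: "2 \<le> T" and K: "1 \<le> K" and x: "real T < x" "x \<le> 2 * real K * ln (real T)"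
  shows "real T + 1 \<le> 8 * (sqrt (real K * real T * ln (real T)) + real K)"
proof -
  let ?s = "sqrt (real K * real T * ln (real T))"
  have lnT: "0 \<le> ln (real T)" using T by simp
  have "real T * real T \<le> real T * (2 * real K * ln (real T))" using x by (intro mult_left_mono) auto
  then have "sqrt (real T ^ 2) \<le> sqrt (real T * (2 * real K * ln (real T)))"
    by (intro real_sqrt_le_mono) (simp add: power2_eq_square)
  also have "\<dots> = sqrt 2 * ?s" by (simp add: real_sqrt_mult[symmetric] algebra_simps)
  also have "\<dots> \<le> 2 * ?s" using sqrt2_less_2 lnT by (intro mult_right_mono) auto
  finally have "real T \<le> 2 * ?s" by simp
  then show ?thesis using K by simp
qed

lemma integral_le_dom:
  assumes "integrable M B" "\<And>x. x \<in> space M \<Longrightarrow> f x \<le> B x" "integral\<^sup>L M B \<le> c" "0 \<le> c"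
  shows "integral\<^sup>L M f \<le> (c::real)"
proof (cases "integrable M f")
  case True
  then have "integral\<^sup>L M f \<le> integral\<^sup>L M B" using assms(1,2) by (intro integral_mono) auto
  then show ?thesis using assms(3) by simp
next
  case False
  then show ?thesis using assms(4) by (simp add: not_integrable_integral_eq)
qed

lemma main_bound:
  fixes P :: "'z measure" and adv :: "nat \<Rightarrow> (nat \<Rightarrow> 'z) \<Rightarrow> nat"
  assumes K1: "1 \<le> K" and KT: "K \<le> T" and fA: "finite A" and nA: "A \<noteq> {}"
    and fAf: "finite Af" and nAf: "Af \<noteq> {}" and P: "prob_space P"
    and u01: "\<forall>z\<in>space P. \<forall>a\<in>A. \<forall>af\<in>Af. 0 \<le> u z a af \<and> u z a af \<le> 1"
    and um: "\<forall>a af. (\<lambda>z. u z a af) \<in> borel_measurable P"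
    and ufm: "\<forall>i a af. (\<lambda>z. uf i z a af) \<in> borel_measurable P"
    and dl: "\<delta> \<le> 1 / real T"
    and hE: "\<forall>z\<in>space P. E z \<subseteq> mixed_strats A \<and> approx_extreme_points A Af uf K \<delta> z (E z)"
    and hpol: "\<forall>\<omega>\<in>weight_grid K T. \<forall>z\<in>space P. pol \<omega> z \<in> E z
          \<and> (\<forall>x\<in>E z. (\<Sum>i<K. leader_gain A Af u uf i z x * \<omega> i)
                     \<le> (\<Sum>i<K. leader_gain A Af u uf i z (pol \<omega> z) * \<omega> i))"
    and polm: "\<forall>\<omega>\<in>weight_grid K T. \<forall>a. (\<lambda>z. pol \<omega> z a) \<in> borel_measurable P"
    and am: "\<forall>t<T. adv t \<in> measurable (PiM {..<T} (\<lambda>_. P)) (count_space UNIV)"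
    and ak: "\<forall>t<T. \<forall>zs\<in>space (PiM {..<T} (\<lambda>_. P)). adv t zs < K"
    and adep: "\<forall>t<T. \<forall>zs\<in>space (PiM {..<T} (\<lambda>_. P)). \<forall>zs'\<in>space (PiM {..<T} (\<lambda>_. P)).
          (\<forall>s<t. zs s = zs' s) \<longrightarrow> adv t zs = adv t zs'"
  shows "hedge_expected_regret P A Af u uf K T pol adv
          \<le> 8 * (sqrt (real K * real T * ln (real T)) + real K)"
proof -
  interpret P: prob_space P by (rule P)
  define PI where "PI = PiM {..<T} (\<lambda>_. P)"
  interpret PP: prob_space PI unfolding PI_def by (intro prob_space_PiM P)
  define g where "g i z x = leader_gain A Af u uf i z x" for i z x
  have T1: "T \<ge> 1" using K1 KT by simp
  have gain01: "0 \<le> g i z x \<and> g i z x \<le> 1" if "z \<in> space P" "x \<in> mixed_strats A" for i z x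
  proof -
    have br: "best_resp A Af uf i z x \<in> Af" using best_resp_props[OF fAf nAf, of A uf i z x] by blast
    have "\<forall>a\<in>A. 0 \<le> u z a (best_resp A Af uf i z x) \<and> u z a (best_resp A Af uf i z x) \<le> 1"
      using u01 that(1) br by simp
    from mixed_util_bounds[of x A u z "best_resp A Af uf i z x", OF that(2) fA this] show ?thesis unfolding g_def leader_gain_def .
  qed
  have polE: "pol \<omega> z \<in> mixed_strats A" if "\<omega> \<in> weight_grid K T" "z \<in> space P" for \<omega> z
    using hpol hE that by blast
  have gridfc: "finite (weight_grid K T) \<and> card (weight_grid K T) \<le> (T + 1) ^ K"
    by (rule grid_finite_card[OF T1])
  define e0 where "e0 = (\<lambda>i::nat. if i = 0 then 1 else (0::real))"
  have e0g: "e0 \<in> weight_grid K T" using K1 unfolding weight_grid_def e0_def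
    by (auto simp: sum.delta)
  define Pol where "Pol = policy_class P K T pol"
  have Pol_eq: "Pol = (\<lambda>\<omega>. restrict (pol \<omega>) (space P)) ` weight_grid K T"
    unfolding Pol_def policy_class_def ..
  have finPol: "finite Pol" using gridfc Pol_eq by simp
  have nPol: "Pol \<noteq> {}" using e0g Pol_eq by auto
  define M where "M = card (weight_grid K T)"
  have "0 < M" unfolding M_def card_gt_0_iff using gridfc e0g by auto
  then have M1: "1 \<le> M" by simp
  have NM: "card Pol \<le> M" unfolding M_def Pol_eq using gridfc by (intro card_image_le) simp
  have "0 < card Pol" unfolding card_gt_0_iff using finPol nPol by auto
  then have N1: "1 \<le> card Pol" by simp
  have spPI: "zs t \<in> space P" if "zs \<in> space PI" "t < T" for zs t
    using that unfolding PI_def space_PiM by auto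
  define Yw where "Yw \<omega> i z = g i z (pol \<omega> z)" for \<omega> i z
  have Ywm: "Yw \<omega> i \<in> borel_measurable P" if "\<omega> \<in> weight_grid K T" for \<omega> i
    unfolding Yw_def g_def using polm that by (intro meas_gain[OF fAf um ufm]) auto
  have Yw01: "\<forall>z\<in>space P. 0 \<le> Yw \<omega> i z \<and> Yw \<omega> i z \<le> 1" if "\<omega> \<in> weight_grid K T" for \<omega> i
    unfolding Yw_def using gain01 polE that by blast
  define G where "G i \<omega> = (\<integral>z. Yw \<omega> i z \<partial>P)" for i \<omega>
  define wz where "wz zs = (\<lambda>i. if i < K then real (card {t\<in>{..<T}. adv t zs = i}) / real T else 0)" for zs
  have wzg: "wz zs \<in> weight_grid K T" if zs: "zs \<in> space PI" for zs
  proof -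
    have akz: "\<forall>t<T. adv t zs < K" using ak zs unfolding PI_def by auto
    have "(\<Sum>t<T. (1::real)) = (\<Sum>i<K. real (card {t\<in>{..<T}. adv t zs = i}) * 1)"
      by (rule count_sum[OF akz])
    then have cs: "(\<Sum>i<K. real (card {t\<in>{..<T}. adv t zs = i})) = real T" by simp
    have "(\<Sum>i<K. wz zs i) = (\<Sum>i<K. real (card {t\<in>{..<T}. adv t zs = i})) / real T"
      unfolding wz_def by (simp add: sum_divide_distrib)
    also have "\<dots> = 1" using cs T1 by simp
    finally have "(\<Sum>i<K. wz zs i) = 1" .
    moreover have "real T * wz zs i \<in> \<nat>" if "i < K" for i
      using that T1 unfolding wz_def by simp
    ultimately show ?thesis unfolding weight_grid_def wz_def by auto
  qed
  have intg: "integrable P (\<lambda>z. g i z (\<pi> z))"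
    if "\<forall>z\<in>space P. \<pi> z \<in> mixed_strats A" "\<forall>a. (\<lambda>z. \<pi> z a) \<in> borel_measurable P" for i \<pi>
  proof (rule P.integrable_const_bound[where B=1])
    show "AE z in P. norm (g i z (\<pi> z)) \<le> 1" using gain01 that(1) by (intro AE_I2) auto
    show "(\<lambda>z. g i z (\<pi> z)) \<in> borel_measurable P" unfolding g_def using that(2)
      by (intro meas_gain[OF fAf um ufm]) auto
  qed
  have intY: "integrable P (Yw \<omega> i)" if "\<omega> \<in> weight_grid K T" for \<omega> i
    unfolding Yw_def using intg[of "pol \<omega>" i] polE polm that by auto
  have bench: "benchmark P A Af u uf T (\<lambda>t. adv t zs) \<le> (\<Sum>t<T. G (adv t zs) (wz zs)) + 1"
    if zs: "zs \<in> space PI" for zs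
  proof -
    define fs where "fs = (\<lambda>t. adv t zs)"
    define w where "w = wz zs"
    have wg: "w \<in> weight_grid K T" unfolding w_def by (rule wzg[OF zs])
    have w0: "\<forall>i<K. 0 \<le> w i" and w1: "(\<Sum>i<K. w i) = 1" using wg unfolding weight_grid_def by auto
    have akz: "\<forall>t<T. fs t < K" using ak zs unfolding PI_def fs_def by auto
    have cnt: "(\<Sum>t<T. h (fs t)) = real T * (\<Sum>i<K. h i * w i)" for h
    proof -
      have "(\<Sum>t<T. h (fs t)) = (\<Sum>i<K. real (card {t\<in>{..<T}. fs t = i}) * h i)"
        by (rule count_sum[OF akz])
      also have "\<dots> = (\<Sum>i<K. real T * (h i * w i))"
        by (intro sum.cong refl) (use T1 in \<open>auto simp: w_def wz_def fs_def\<close>)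
      also have "\<dots> = real T * (\<Sum>i<K. h i * w i)" by (simp add: sum_distrib_left)
      finally show ?thesis .
    qed
    define Q where "Q = {\<pi>. (\<forall>z\<in>space P. \<pi> z \<in> mixed_strats A) \<and> (\<forall>a. (\<lambda>z. \<pi> z a) \<in> borel_measurable P)}"
    obtain a0 where a0: "a0 \<in> A" using nA by auto
    define e1 where "e1 = (\<lambda>a::nat. if a = a0 then 1 else (0::real))"
    have e1m: "e1 \<in> mixed_strats A" unfolding mixed_strats_def e1_def using a0 fA by (auto simp: sum.delta)
    have Qne: "Q \<noteq> {}"
    proof -
      have "(\<lambda>z. e1) \<in> Q" unfolding Q_def using e1m by auto
      then show ?thesis by auto
    qed
    have Tdl: "real T * max 0 \<delta> \<le> 1"
    proof (cases "\<delta> \<le> 0")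
      case True then show ?thesis by (simp add: max_def)
    next
      case False
      then have "real T * \<delta> \<le> real T * (1 / real T)" using dl T1 by (intro mult_left_mono) auto
      then show ?thesis using False T1 by (simp add: max_def)
    qed
    have each: "(\<Sum>t<T. \<integral>z. leader_gain A Af u uf (fs t) z (\<pi> z) \<partial>P) \<le> (\<Sum>t<T. G (fs t) w) + 1"
      if "\<pi> \<in> Q" for \<pi>
    proof -
      have \<pi>1: "\<forall>z\<in>space P. \<pi> z \<in> mixed_strats A" and \<pi>2: "\<forall>a. (\<lambda>z. \<pi> z a) \<in> borel_measurable P"
        using that unfolding Q_def by auto
      have pt: "(\<Sum>t<T. g (fs t) z (\<pi> z)) \<le> (\<Sum>t<T. Yw w (fs t) z) + 1" if z: "z \<in> space P" for z
      proof -
        have hu: "\<forall>a\<in>A. \<forall>af\<in>Af. \<bar>u z a af\<bar> \<le> 1" using u01 z by auto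
        obtain x' where x': "x' \<in> E z" and
          xb: "(\<Sum>i<K. g i z (\<pi> z) * w i) \<le> (\<Sum>i<K. g i z x' * w i) + max 0 \<delta>"
        proof -
          have ap: "approx_extreme_points A Af uf K \<delta> z (E z)" using hE z by blast
          have xm: "\<pi> z \<in> mixed_strats A" using \<pi>1 z by blast
          show ?thesis using approx_opt[of A Af u z uf K \<delta> "E z" w "\<pi> z", OF fA fAf nAf hu ap w0 w1 xm] that
            unfolding g_def by blast
        qed
        have "(\<Sum>i<K. g i z x' * w i) \<le> (\<Sum>i<K. g i z (pol w z) * w i)"
          using hpol wg z x' unfolding g_def by blast
        with xb have ineq: "(\<Sum>i<K. g i z (\<pi> z) * w i) \<le> (\<Sum>i<K. g i z (pol w z) * w i) + max 0 \<delta>" by simp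
        have "real T * (\<Sum>i<K. g i z (\<pi> z) * w i) \<le> real T * (\<Sum>i<K. g i z (pol w z) * w i) + real T * max 0 \<delta>"
          using mult_left_mono[OF ineq, of "real T"] by (simp add: distrib_left)
        then show ?thesis using cnt[of "\<lambda>i. g i z (\<pi> z)"] cnt[of "\<lambda>i. g i z (pol w z)"] Tdl
          unfolding Yw_def by simp
      qed
      have "(\<Sum>t<T. \<integral>z. leader_gain A Af u uf (fs t) z (\<pi> z) \<partial>P) = (\<integral>z. (\<Sum>t<T. g (fs t) z (\<pi> z)) \<partial>P)"
        using intg[OF \<pi>1 \<pi>2] unfolding g_def by (subst Bochner_Integration.integral_sum) auto
      also have "\<dots> \<le> (\<integral>z. (\<Sum>t<T. Yw w (fs t) z) + 1 \<partial>P)"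
        using intg[OF \<pi>1 \<pi>2] intY[OF wg] pt by (intro integral_mono) auto
      also have "\<dots> = (\<Sum>t<T. G (fs t) w) + 1"
        using intY[OF wg] unfolding G_def by (simp add: Bochner_Integration.integral_sum P.prob_space)
      finally show ?thesis .
    qed
    show ?thesis using cSUP_least[OF Qne each] unfolding benchmark_def Q_def[symmetric] fs_def w_def by simp
  qed
  have pPol: "\<exists>\<omega>\<in>weight_grid K T. \<pi> = restrict (pol \<omega>) (space P)" if "\<pi> \<in> Pol" for \<pi>
    using that Pol_eq by auto
  have PolM: "\<pi> z \<in> mixed_strats A" if "\<pi> \<in> Pol" "z \<in> space P" for \<pi> z
    using pPol[OF that(1)] polE that(2) by auto
  define Hs where "Hs zs = (\<Sum>t<T. \<Sum>\<pi>\<in>Pol. hedge_prob A Af u uf Pol T zs (\<lambda>t. adv t zs) t \<pi>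
      * leader_gain A Af u uf (adv t zs) (zs t) (\<pi> (zs t)))" for zs
  define Rg where "Rg zs = benchmark P A Af u uf T (\<lambda>t. adv t zs) - Hs zs" for zs
  have reg_eq: "hedge_expected_regret P A Af u uf K T pol adv = (\<integral>zs. Rg zs \<partial>PI)"
    unfolding hedge_expected_regret_def Let_def Pol_def[symmetric] PI_def[symmetric] Rg_def Hs_def ..
  have hp_nn: "0 \<le> hedge_prob A Af u uf Pol T zs fs t \<pi>" for zs fs t \<pi>
    unfolding hedge_prob_def Let_def by (intro divide_nonneg_nonneg sum_nonneg) auto
  have gz: "0 \<le> leader_gain A Af u uf i (zs t) (\<pi> (zs t)) \<and> leader_gain A Af u uf i (zs t) (\<pi> (zs t)) \<le> 1"
    if zs: "zs \<in> space PI" and t: "t < T" and pp: "\<pi> \<in> Pol" for zs t \<pi> i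
  proof -
    have z: "zs t \<in> space P" using spPI[OF zs t] .
    have "\<pi> (zs t) \<in> mixed_strats A" using PolM[OF pp z] .
    from gain01[OF z this] show ?thesis unfolding g_def .
  qed
  have Hs_nn: "0 \<le> Hs zs" if zs: "zs \<in> space PI" for zs
    unfolding Hs_def
  proof (intro sum_nonneg mult_nonneg_nonneg hp_nn)
    fix t \<pi> assume "t \<in> {..<T}" "\<pi> \<in> Pol"
    then show "0 \<le> leader_gain A Af u uf (adv t zs) (zs t) (\<pi> (zs t))"
      using gz[OF zs] by auto
  qed
  have G01: "0 \<le> G i \<omega> \<and> G i \<omega> \<le> 1" if w: "\<omega> \<in> weight_grid K T" for i \<omega>
  proof -
    have "G i \<omega> \<le> (\<integral>z. 1 \<partial>P)" unfolding G_def using intY[OF w] Yw01[OF w]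
      by (intro integral_mono) auto
    moreover have "0 \<le> G i \<omega>" unfolding G_def using Yw01[OF w]
      by (intro integral_nonneg_AE AE_I2) auto
    ultimately show ?thesis by (simp add: P.prob_space)
  qed
  have Rg_triv: "Rg zs \<le> real T + 1" if zs: "zs \<in> space PI" for zs
  proof -
    have "(\<Sum>t<T. G (adv t zs) (wz zs)) \<le> (\<Sum>t<T. 1)" using G01[OF wzg[OF zs]] by (intro sum_mono) auto
    then show ?thesis using bench[OF zs] Hs_nn[OF zs] unfolding Rg_def by simp
  qed
  define N where "N = card Pol"
  have lnMb: "ln (real M) \<le> 2 * real K * ln (real T) \<and> 1 \<le> 2 * real K * ln (real T)" if T2: "2 \<le> T"
    using lnM_bound[OF T2 K1 M1] gridfc unfolding M_def by auto
  have lnNM: "ln (real N) \<le> ln (real M)" using N1 NM unfolding N_def by (subst ln_le_cancel_iff) auto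
  have lnN0: "0 \<le> ln (real N)" using N1 unfolding N_def by simp
  have "(\<integral>zs. Rg zs \<partial>PI) \<le> 8 * (sqrt (real K * real T * ln (real T)) + real K)"
  proof (cases "T = 1 \<or> real T < ln (real N)")
    case True
    have bnd: "real T + 1 \<le> 8 * (sqrt (real K * real T * ln (real T)) + real K)"
    proof (cases "T = 1")
      case True then have "K = 1" using K1 KT by simp
      then show ?thesis using True by simp
    next
      case False then have T2: "2 \<le> T" using T1 by simp
      have "real T < ln (real N)" using \<open>T = 1 \<or> real T < ln (real N)\<close> False by simp
      then show ?thesis using numeric_triv[OF T2 K1, of "ln (real N)"] lnNM lnMb[OF T2] by linarith
    qed
    show ?thesis
      by (rule integral_le_dom[where B="\<lambda>_. real T + 1"]) (use Rg_triv bnd in \<open>auto simp: PP.prob_space\<close>)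
  next
    case False
    then have T2: "2 \<le> T" and lnNT: "ln (real N) \<le> real T" using T1 by auto
    define \<eta> where "\<eta> = sqrt (ln (real N) / real T)"
    have \<eta>0: "0 \<le> \<eta>" unfolding \<eta>_def using lnN0 by simp
    have \<eta>1: "\<eta> \<le> 1" unfolding \<eta>_def using lnNT T2 lnN0 by (simp add: divide_le_eq)
    have \<eta>2: "\<eta>^2 * real T = ln (real N)" unfolding \<eta>_def using lnN0 T2 by simp
    have \<eta>T: "\<eta> * real T = sqrt (real T * ln (real N))"
      unfolding \<eta>_def using sqrt_div_mul[of "real T" "ln (real N)"] lnN0 T2 by (simp add: mult.commute)
    have hedge: "(\<Sum>t<T. Yw (wz zs) (adv t zs) (zs t)) - Hs zs \<le> 2 * sqrt (real T * ln (real N))"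
      if zs: "zs \<in> space PI" for zs
    proof -
      define w where "w = wz zs"
      define \<pi>0 where "\<pi>0 = restrict (pol w) (space P)"
      have \<pi>0P: "\<pi>0 \<in> Pol" using Pol_eq wzg[OF zs] unfolding \<pi>0_def w_def by auto
      define gg where "gg t \<pi> = leader_gain A Af u uf (adv t zs) (zs t) (\<pi> (zs t))" for t \<pi>
      have gg01: "0 \<le> gg t \<pi> \<and> gg t \<pi> \<le> 1" if "t < T" "\<pi> \<in> Pol" for t \<pi>
        unfolding gg_def using gz[OF zs that] .
      have g\<pi>0: "(\<Sum>t<T. gg t \<pi>0) = (\<Sum>t<T. Yw w (adv t zs) (zs t))"
        unfolding gg_def \<pi>0_def Yw_def g_def using spPI[OF zs] by (intro sum.cong refl) auto
      have Hs_eq: "Hs zs = (\<Sum>t<T. \<Sum>\<pi>\<in>Pol. exp (- \<eta> * (\<Sum>s<t. - gg s \<pi>)) / (\<Sum>\<pi>'\<in>Pol. exp (- \<eta> * (\<Sum>s<t. - gg s \<pi>'))) * gg t \<pi>)"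
        unfolding Hs_def hedge_prob_def Let_def gg_def \<eta>_def N_def ..
      have hb: "\<eta> * (\<Sum>t<T. gg t \<pi>0) \<le> ln (real (card Pol)) + \<eta> * Hs zs + \<eta>^2 * real T"
        unfolding Hs_eq by (rule hedge_bound[OF finPol \<pi>0P gg01 \<eta>0 \<eta>1])
      show ?thesis
      proof (cases "\<eta> = 0")
        case True
        then have "ln (real N) = 0" using \<eta>2 by simp
        then have "N = 1" using N1 unfolding N_def by simp
        then have Pol1: "Pol = {\<pi>0}" using \<pi>0P unfolding N_def by (metis card_1_singletonE singletonD)
        have "Hs zs = (\<Sum>t<T. gg t \<pi>0)" unfolding Hs_eq Pol1 by simp
        then show ?thesis using g\<pi>0 lnN0 unfolding w_def by simp
      next
        case False
        then have \<eta>p: "0 < \<eta>" using \<eta>0 by simp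
        have "\<eta> * (\<Sum>t<T. gg t \<pi>0) - \<eta> * Hs zs - 2 * (\<eta>^2 * real T) \<le> 0"
          using hb \<eta>2 unfolding N_def by linarith
        then have "\<eta> * ((\<Sum>t<T. gg t \<pi>0) - Hs zs - 2 * (\<eta> * real T)) \<le> 0"
          by (simp add: algebra_simps power2_eq_square)
        then have "(\<Sum>t<T. gg t \<pi>0) - Hs zs - 2 * (\<eta> * real T) \<le> 0"
          using \<eta>p by (simp add: mult_le_0_iff)
        then show ?thesis using g\<pi>0 \<eta>T unfolding w_def by simp
      qed
    qed
    define Lg where "Lg = max (ln (real M)) 1"
    define l where "l = sqrt (Lg / real T)"
    have Lg1: "1 \<le> Lg" unfolding Lg_def by simp
    have l0: "0 < l" unfolding l_def using Lg1 T2 by simp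
    have l2: "l^2 * real T = Lg" unfolding l_def using Lg1 T2 by simp
    have lT: "l * real T = sqrt (real T * Lg)"
      unfolding l_def using sqrt_div_mul[of "real T" Lg] Lg1 T2 by (simp add: mult.commute)
    define D where "D \<omega> zs = (\<Sum>t<T. (\<integral>z. Yw \<omega> (adv t zs) z \<partial>P) - Yw \<omega> (adv t zs) (zs t))" for \<omega> zs
    have Dint: "integrable PI (\<lambda>zs. exp (l * D \<omega> zs)) \<and> (\<integral>zs. exp (l * D \<omega> zs) \<partial>PI) \<le> exp (l^2 * real T / 8)"
      if w: "\<omega> \<in> weight_grid K T" for \<omega>
      unfolding D_def PI_def by (rule mart_integral[OF P l0 am adep Ywm[OF w] Yw01[OF w]])
    define S where "S = real M * exp (l^2 * real T / 8)"
    have Spos: "0 < S" unfolding S_def using M1 by simp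
    define Z where "Z zs = (\<Sum>\<omega>\<in>weight_grid K T. exp (l * D \<omega> zs))" for zs
    define c0 where "c0 = 1 + 2 * sqrt (real T * ln (real N)) + (ln S - 1) / l"
    define c1 where "c1 = 1 / (l * S)"
    define B where "B zs = c0 + c1 * Z zs" for zs
    have ptw: "Rg zs \<le> B zs" if zs: "zs \<in> space PI" for zs
    proof -
      define w where "w = wz zs"
      have wg: "w \<in> weight_grid K T" unfolding w_def by (rule wzg[OF zs])
      have D_eq: "D w zs = (\<Sum>t<T. G (adv t zs) w) - (\<Sum>t<T. Yw w (adv t zs) (zs t))"
        unfolding D_def G_def by (simp add: sum_subtractf)
      have r1: "Rg zs \<le> 1 + 2 * sqrt (real T * ln (real N)) + D w zs"
        using bench[OF zs] hedge[OF zs] D_eq unfolding Rg_def w_def by simp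
      have eZ: "exp (l * D w zs) \<le> Z zs" unfolding Z_def using gridfc wg
        by (intro member_le_sum) auto
      have "0 < exp (l * D w zs)" by simp
      then have Zpos: "0 < Z zs" using eZ by linarith
      have "l * D w zs = ln (exp (l * D w zs))" by simp
      also have "\<dots> \<le> ln (Z zs)" using eZ Zpos by (subst ln_le_cancel_iff) auto
      also have "\<dots> = ln S + ln (Z zs / S)" using Zpos Spos by (simp add: ln_div)
      also have "ln (Z zs / S) \<le> Z zs / S - 1" using Zpos Spos by (intro ln_le_minus_one) simp
      finally have "l * D w zs \<le> ln S + Z zs / S - 1" by simp
      then have "D w zs \<le> (ln S + Z zs / S - 1) / l" using l0 by (simp add: pos_le_divide_eq mult.commute)
      also have "(ln S + Z zs / S - 1) / l = (ln S - 1) / l + c1 * Z zs"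
        unfolding c1_def using l0 Spos by (simp add: field_simps)
      finally show ?thesis using r1 unfolding B_def c0_def by simp
    qed
    have Zint: "integrable PI Z" unfolding Z_def using Dint by (intro Bochner_Integration.integrable_sum) auto
    have Zle: "(\<integral>zs. Z zs \<partial>PI) \<le> S"
    proof -
      have "(\<integral>zs. Z zs \<partial>PI) = (\<Sum>\<omega>\<in>weight_grid K T. \<integral>zs. exp (l * D \<omega> zs) \<partial>PI)"
        unfolding Z_def using Dint by (intro Bochner_Integration.integral_sum) auto
      also have "\<dots> \<le> (\<Sum>\<omega>\<in>weight_grid K T. exp (l^2 * real T / 8))"
        using Dint by (intro sum_mono) auto
      also have "\<dots> = S" unfolding S_def M_def by simp
      finally show ?thesis .
    qed
    have Bint: "integrable PI B" unfolding B_def using Zint by (auto simp: PP.prob_space)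
    have Bval: "(\<integral>zs. B zs \<partial>PI) = c0 + c1 * (\<integral>zs. Z zs \<partial>PI)"
      unfolding B_def using Zint by (simp add: PP.prob_space)
    have c1pos: "0 \<le> c1" unfolding c1_def using l0 Spos by simp
    have "(\<integral>zs. B zs \<partial>PI) \<le> c0 + c1 * S" unfolding Bval using Zle c1pos by (intro add_left_mono mult_left_mono) auto
    also have "c0 + c1 * S = 1 + 2 * sqrt (real T * ln (real N)) + ln S / l"
      unfolding c0_def c1_def using l0 Spos by (simp add: field_simps)
    also have "ln S = ln (real M) + l^2 * real T / 8" unfolding S_def using M1 by (simp add: ln_mult)
    also have "(ln (real M) + l^2 * real T / 8) / l \<le> (l^2 * real T + l^2 * real T) / l"
      using l0 l2 by (intro divide_right_mono add_mono) (auto simp: Lg_def)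
    also have "(l^2 * real T + l^2 * real T) / l = 2 * (l * real T)" using l0 by (simp add: power2_eq_square field_simps)
    finally have Bb: "(\<integral>zs. B zs \<partial>PI) \<le> 1 + 2 * sqrt (real T * ln (real N)) + 2 * sqrt (real T * Lg)"
      unfolding lT by simp
    have fin: "1 + 2 * sqrt (real T * ln (real N)) + 2 * sqrt (real T * Lg)
        \<le> 8 * (sqrt (real K * real T * ln (real T)) + real K)"
      using numeric_final[OF T2 K1, of "ln (real N)" Lg] lnN0 lnNM lnMb[OF T2] Lg1
      unfolding Lg_def by (auto simp: max_def)
    show ?thesis
    proof (rule integral_le_dom[OF Bint ptw])
      have "0 \<le> ln (real T)" using T2 by simp
      then show "0 \<le> 8 * (sqrt (real K * real T * ln (real T)) + real K)" by simp
    qed (use Bb fin in auto)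
  qed
  then show ?thesis using reg_eq by simp
qed

theorem mainTheorem7:
  shows "\<exists>C::real. \<forall>(T::nat) (K::nat) (A::nat set) (Af::nat set) (d::nat)
      (P::(nat \<Rightarrow> real) measure) u uf E (\<delta>::real) pol adv.
    (1 \<le> K \<and> K \<le> T
     \<and> finite A \<and> A \<noteq> {} \<and> finite Af \<and> Af \<noteq> {}
     \<and> prob_space P \<and> space P \<subseteq> {z. \<forall>j\<ge>d. z j = 0}
     \<and> (\<forall>z\<in>space P. \<forall>a\<in>A. \<forall>af\<in>Af. 0 \<le> u z a af \<and> u z a af \<le> 1)
     \<and> (\<forall>i<K. \<forall>z\<in>space P. \<forall>a\<in>A. \<forall>af\<in>Af. 0 \<le> uf i z a af \<and> uf i z a af \<le> 1)
     \<and> (\<forall>a af. (\<lambda>z. u z a af) \<in> borel_measurable P)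
     \<and> (\<forall>i a af. (\<lambda>z. uf i z a af) \<in> borel_measurable P)
     \<and> \<delta> \<le> 1 / real T
     \<and> (\<forall>z\<in>space P. E z \<subseteq> mixed_strats A \<and> approx_extreme_points A Af uf K \<delta> z (E z))
     \<and> (\<forall>\<omega>\<in>weight_grid K T. \<forall>z\<in>space P. pol \<omega> z \<in> E z
          \<and> (\<forall>x\<in>E z. (\<Sum>i<K. leader_gain A Af u uf i z x * \<omega> i)
                     \<le> (\<Sum>i<K. leader_gain A Af u uf i z (pol \<omega> z) * \<omega> i)))
     \<and> (\<forall>\<omega>\<in>weight_grid K T. \<forall>a. (\<lambda>z. pol \<omega> z a) \<in> borel_measurable P)
     \<and> (\<forall>t<T. adv t \<in> measurable (PiM {..<T} (\<lambda>_. P)) (count_space UNIV))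
     \<and> (\<forall>t<T. \<forall>zs\<in>space (PiM {..<T} (\<lambda>_. P)). adv t zs < K)
     \<and> (\<forall>t<T. \<forall>zs\<in>space (PiM {..<T} (\<lambda>_. P)). \<forall>zs'\<in>space (PiM {..<T} (\<lambda>_. P)).
          (\<forall>s<t. zs s = zs' s) \<longrightarrow> adv t zs = adv t zs'))
    \<longrightarrow> hedge_expected_regret P A Af u uf K T pol adv
          \<le> C * (sqrt (real K * real T * ln (real T)) + real K)"
    apply (rule exI[of _ 8])
  apply (intro allI impI)
  apply (elim conjE)
  apply (rule main_bound)
                 apply assumption+
  done

end
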